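(* Let $n\ge1$, let $d_1,\dots,d_n\in\mathbb R$, let $K_1,K_2$ be a partition of $\{1,\dots,n\}$ (either may be empty), and let $v:\Delta_n\to\mathbb R^n$ be a continuous function such that (i) for all $\boldsymbol\lambda\in\Delta_n$: $\boldsymbol\lambda^T v(\boldsymbol\lambda)=\sum_{k=1}^n\lambda_kd_k$; (ii) for all $k\in K_1$ and all $\boldsymbol\lambda\in\Delta_n$ with $\lambda_k=0$: $v_k(\boldsymbol\lambda)<d_k$; (iii) for all $k\in K_2$ and all $\boldsymbol\lambda\in\Delta_n$: $v_k(\boldsymbol\lambda)\le d_k$. Then there exists $\boldsymbol\lambda^*\in\Delta_n$ with $v(\boldsymbol\lambda^* )=[d_1,\dots,d_n]^T$.
   Context: $\Delta_n=\{(\lambda_1,\dots,\lambda_n)\in\mathbb R^n: \lambda_i\ge0,\ \sum_{i=1}^n\lambda_i=1\}$ is the standard simplex. *)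

theory Defs
  imports "HOL-Analysis.Analysis"
begin

text \<open>The standard simplex Delta_n, indices ranging over the finite type 'n (n = CARD('n)).\<close>
definition std_simplex :: "(real ^ 'n) set" where
  "std_simplex = {lam. (\<forall>i. 0 \<le> lam $ i) \<and> (\<Sum>i\<in>UNIV. lam $ i) = 1}"

end

theory Submission
  imports Defs
begin

lemma simplex_compact: "compact (std_simplex :: (real ^ 'n) set)"
proof -
  have cl: "closed (std_simplex :: (real ^ 'n) set)"
  proof -
    have "std_simplex = (\<Inter>i. {lam::real^'n. 0 \<le> lam $ i}) \<inter> {lam. (\<Sum>i\<in>UNIV. lam $ i) = 1}"
      unfolding std_simplex_def by auto
    moreover have "closed {lam::real^'n. 0 \<le> lam $ i}" for i
      by (intro closed_Collect_le continuous_intros)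
    moreover have "closed {lam::real^'n. (\<Sum>i\<in>UNIV. lam $ i) = 1}"
      by (intro closed_Collect_eq continuous_intros)
    ultimately show ?thesis by (metis closed_INT closed_Int)
  qed
  have "bounded (std_simplex :: (real ^ 'n) set)"
    unfolding bounded_iff
  proof (intro exI ballI)
    fix x :: "real^'n" assume "x \<in> std_simplex"
    then have "sum(\<lambda>i. \<bar>x$i\<bar>) UNIV = 1" unfolding std_simplex_def by auto
    then show "norm x \<le> 1" using norm_le_l1_cart[of x] by simp
  qed
  with cl show ?thesis using compact_eq_bounded_closed by blast
qed

lemma simplex_convex: "convex (std_simplex :: (real ^ 'n) set)"
  unfolding convex_def std_simplex_def
  by (auto simp: sum.distrib sum_distrib_left[symmetric])

lemma simplex_nonempty: "(\<chi> i. 1 / real CARD('n)) \<in> (std_simplex :: (real ^ 'n) set)"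
  unfolding std_simplex_def by auto

theorem lemma1:
  fixes d :: "real ^ 'n"
    and K1 K2 :: "'n set"
    and v :: "real ^ 'n \<Rightarrow> real ^ 'n"
  assumes part: "K1 \<union> K2 = UNIV" "K1 \<inter> K2 = {}"
    and cont: "continuous_on std_simplex v"
    and i: "\<And>lam. lam \<in> std_simplex \<Longrightarrow> lam \<bullet> v lam = (\<Sum>k\<in>UNIV. lam $ k * d $ k)"
    and ii: "\<And>k lam. k \<in> K1 \<Longrightarrow> lam \<in> std_simplex \<Longrightarrow> lam $ k = 0 \<Longrightarrow> v lam $ k < d $ k"
    and iii: "\<And>k lam. k \<in> K2 \<Longrightarrow> lam \<in> std_simplex \<Longrightarrow> v lam $ k \<le> d $ k"
  shows "\<exists>lam \<in> std_simplex. v lam = d"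
proof -
  define c where "c lam k = max 0 (d $ k - v lam $ k)" for lam k
  define S where "S lam = (\<Sum>j\<in>UNIV. c lam j)" for lam
  define f where "f lam = (\<chi> k. (lam $ k + c lam k) / (1 + S lam))" for lam
  have cpos: "c lam k \<ge> 0" for lam k unfolding c_def by simp
  have Spos: "S lam \<ge> 0" for lam unfolding S_def by (simp add: cpos sum_nonneg)
  have fcont: "continuous_on std_simplex f"
    unfolding f_def S_def c_def
    by (intro continuous_intros cont) (smt (verit) max.cobounded1 sum_nonneg)
  have fmaps: "f ` std_simplex \<subseteq> std_simplex"
  proof
    fix y assume "y \<in> f ` std_simplex"
    then obtain lam where lam: "lam \<in> std_simplex" "y = f lam" by auto
    have p: "1 + S lam > 0" using Spos[of lam] by linarith
    have "(\<Sum>k\<in>UNIV. (lam $ k + c lam k) / (1 + S lam)) = (\<Sum>k\<in>UNIV. (lam $ k + c lam k)) / (1 + S lam)"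
      by (simp add: sum_divide_distrib)
    also have "\<dots> = 1" using lam p unfolding std_simplex_def S_def by (simp add: sum.distrib)
    finally show "y \<in> std_simplex" using lam p cpos unfolding std_simplex_def f_def by auto
  qed
  obtain lam where lam: "lam \<in> std_simplex" "f lam = lam"
    using brouwer[OF simplex_compact simplex_convex _ fcont, of thesis] fmaps simplex_nonempty by blast
  have p: "1 + S lam > 0" using Spos[of lam] by linarith
  have fix_eq: "c lam k = lam $ k * S lam" for k
  proof -
    have "(lam $ k + c lam k) / (1 + S lam) = lam $ k" using lam(2) unfolding f_def
      by (metis vec_lambda_beta)
    then have "lam $ k + c lam k = lam $ k * (1 + S lam)" using p by (simp add: field_simps)
    then show ?thesis by (simp add: algebra_simps)
  qed
  have inner: "(\<Sum>k\<in>UNIV. lam $ k * (v lam $ k - d $ k)) = 0"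
    using i[OF lam(1)] by (simp add: inner_vec_def algebra_simps sum_subtractf)
  have lnn: "lam $ k \<ge> 0" for k using lam(1) unfolding std_simplex_def by auto
  have S0: "S lam = 0"
  proof (rule ccontr)
    assume "S lam \<noteq> 0"
    then have Sp: "S lam > 0" using Spos[of lam] by linarith
    have le: "lam $ k * (v lam $ k - d $ k) \<le> 0" for k
    proof (cases "lam $ k = 0")
      case False
      then have "lam $ k > 0" using lnn[of k] by linarith
      then have "c lam k > 0" using fix_eq[of k] Sp by simp
      then have "v lam $ k < d $ k" unfolding c_def by (simp add: max_def split: if_splits)
      then show ?thesis using lnn[of k] by (simp add: mult_nonneg_nonpos)
    qed simp
    have "\<exists>k. lam $ k > 0"
    proof (rule ccontr)
      assume "\<not> ?thesis"
      then have "\<forall>k. lam $ k = 0" using lnn by (meson less_eq_real_def not_less antisym)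
      then show False using lam(1) unfolding std_simplex_def by auto
    qed
    then obtain k0 where k0: "lam $ k0 > 0" by blast
    then have "c lam k0 > 0" using fix_eq[of k0] Sp by simp
    then have "v lam $ k0 < d $ k0" unfolding c_def by (simp add: max_def split: if_splits)
    then have lt: "lam $ k0 * (v lam $ k0 - d $ k0) < 0" using k0 by (simp add: mult_pos_neg)
    have "(\<Sum>k\<in>UNIV. lam $ k * (v lam $ k - d $ k)) < 0"
      using sum_strict_mono_ex1[of UNIV "\<lambda>k. lam $ k * (v lam $ k - d $ k)" "\<lambda>_. 0"] le lt by auto
    with inner show False by simp
  qed
  have cz: "c lam k = 0" for k using fix_eq[of k] S0 by simp
  have ge: "v lam $ k \<ge> d $ k" for k using cz[of k] unfolding c_def by (simp add: max_def split: if_splits)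
  have terms: "lam $ k * (v lam $ k - d $ k) = 0" for k
  proof -
    have nn: "\<And>k. k\<in>UNIV \<Longrightarrow> lam $ k * (v lam $ k - d $ k) \<ge> 0"
      using lnn ge by (simp add: mult_nonneg_nonneg)
    have "\<forall>j\<in>UNIV. lam $ j * (v lam $ j - d $ j) = 0"
    proof -
      have "((\<Sum>j\<in>UNIV. lam $ j * (v lam $ j - d $ j)) = 0) = (\<forall>j\<in>UNIV. lam $ j * (v lam $ j - d $ j) = 0)"
        by (rule sum_nonneg_eq_0_iff) (auto intro: nn)
      then show ?thesis using inner by simp
    qed
    then show ?thesis by simp
  qed
  have "v lam $ k = d $ k" for k
  proof (cases "lam $ k = 0")
    case True
    show ?thesis
    proof (cases "k \<in> K1")
      case True
      with ii[OF True lam(1)] \<open>lam $ k = 0\<close> ge[of k] show ?thesis by simp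
    next
      case False
      then have "k \<in> K2" using part by auto
      with iii[OF this lam(1)] ge[of k] show ?thesis by simp
    qed
  next
    case False
    then show ?thesis using terms[of k] by simp
  qed
  then have "v lam = d" by (simp add: vec_eq_iff)
  with lam(1) show ?thesis by blast
qed

end
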